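(* Let $q=2^f$ with $f\ge4$, let $q_0<q$ be a power of $2$ with $\gcd(q-1,q_0^2-1)=1$, and let $u\in\mathscr{U}_{q,q_0}$. Let $E$ be the pointwise stabilizer in $\mathrm{Aut}(\Gamma_u)$ of the vertex set $K'=\{\varepsilon\}\cup\Omega_\infty$. Then either $E$ is trivial, or $E$ is an elementary abelian $2$-group which leaves every pair $\{\Phi_{a,c},\Phi_{a,c}^{-1}\}$ ($a,c\in\mathbb{F}_q$) invariant.
   Context: For $a,c\in\mathbb{F}_q$ let $\Phi_{a,c}=\begin{bmatrix}1&0&0\\ a&1&0\\ c&a^{q_0}&1\end{bmatrix}$, $K=\{\Phi_{a,c}: a,c\in\mathbb{F}_q\}\le GL(3,\mathbb{F}_q)$ with identity $\varepsilon=\Phi_{0,0}$ and commutator subgroup $K'$; $\Omega_\infty=\{\Phi_{0,c}:c\in\mathbb{F}_q^*\}$ and for $v\in\mathbb{F}_q$, $\Omega_v=\{\Phi_{a,va^{q_0+1}}: a\in\mathbb{F}_q^*\}$. $\Gamma_u=\mathrm{Cay}(K,\Omega_u\cup\Omega_{u+1})$ is the graph with vertex set $K$, $x,y$ adjacent iff $xy^{-1}\in\Omega_u\cup\Omega_{u+1}$. $\mathscr{U}_{q,q_0}$ is the set of $u\in\mathbb{F}_q$ such that (U1) $u=(1+\eta^{q_0})/(\eta+\eta^{q_0})$ for some primitive element $\eta$ of $\mathbb{F}_q$, and (U2) $X^{q_0+1}+uX^{q_0}+(u+1)X+1$ has no roots in $\mathbb{F}_q$. *)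

theory Defs
  imports "HOL-Analysis.Analysis"
begin

type_synonym 'a mat3 = "'a^3^3"

definition Phi :: "nat \<Rightarrow> 'a::field \<Rightarrow> 'a \<Rightarrow> 'a mat3" where
  "Phi q0 a c = vector [vector [1, 0, 0], vector [a, 1, 0], vector [c, a ^ q0, 1]]"

definition KK :: "nat \<Rightarrow> 'a::field mat3 set" where
  "KK q0 = {Phi q0 a c | a c. True}"

definition Omega_inf :: "nat \<Rightarrow> 'a::field mat3 set" where
  "Omega_inf q0 = {Phi q0 0 c | c. c \<noteq> 0}"

definition Omega :: "nat \<Rightarrow> 'a::field \<Rightarrow> 'a mat3 set" where
  "Omega q0 v = {Phi q0 a (v * a ^ (q0 + 1)) | a. a \<noteq> 0}"

text \<open>The set K' = {epsilon} union Omega_infinity (identity is Phi 0 0).\<close>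
definition Kprime :: "nat \<Rightarrow> 'a::field mat3 set" where
  "Kprime q0 = {Phi q0 0 0} \<union> Omega_inf q0"

definition adj :: "nat \<Rightarrow> 'a::field \<Rightarrow> 'a mat3 \<Rightarrow> 'a mat3 \<Rightarrow> bool" where
  "adj q0 u x y \<longleftrightarrow> x \<in> KK q0 \<and> y \<in> KK q0 \<and>
      x ** matrix_inv y \<in> Omega q0 u \<union> Omega q0 (u + 1)"

text \<open>Graph automorphisms of Gamma_u, as permutations of the vertex set K
  (extended by the identity outside K so that they are unique as HOL functions).\<close>
definition graph_aut :: "nat \<Rightarrow> 'a::field \<Rightarrow> ('a mat3 \<Rightarrow> 'a mat3) set" where
  "graph_aut q0 u = {\<sigma>. bij_betw \<sigma> (KK q0) (KK q0) \<and> (\<forall>x. x \<notin> KK q0 \<longrightarrow> \<sigma> x = x) \<and>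
      (\<forall>x\<in>KK q0. \<forall>y\<in>KK q0. adj q0 u (\<sigma> x) (\<sigma> y) \<longleftrightarrow> adj q0 u x y)}"

definition stabE :: "nat \<Rightarrow> 'a::field \<Rightarrow> ('a mat3 \<Rightarrow> 'a mat3) set" where
  "stabE q0 u = {\<sigma> \<in> graph_aut q0 u. \<forall>x\<in>Kprime q0. \<sigma> x = x}"

definition primitive_elem :: "'a::field \<Rightarrow> bool" where
  "primitive_elem \<eta> \<longleftrightarrow> \<eta> \<noteq> 0 \<and> (\<forall>x. x \<noteq> 0 \<longrightarrow> (\<exists>k::nat. x = \<eta> ^ k))"

definition U_set :: "nat \<Rightarrow> 'a::{field,finite} set" where
  "U_set q0 = {u. (\<exists>\<eta>. primitive_elem \<eta> \<and> u = (1 + \<eta> ^ q0) / (\<eta> + \<eta> ^ q0)) \<and>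
      (\<forall>x. x ^ (q0 + 1) + u * x ^ q0 + (u + 1) * x + 1 \<noteq> 0)}"

end

theory Submission
  imports Defs "HOL-Number_Theory.Residues"
begin

lemma char2:
  assumes "CARD('a::{field,finite}) = 2 ^ f"
  shows "(2::'a) = 0"
proof -
  have "CHAR('a) dvd 2 ^ f" using CHAR_dvd_CARD[where 'a='a] assms by simp
  then obtain i where i: "CHAR('a) = 2 ^ i" using divides_primepow_nat[of 2] by auto
  have "i \<noteq> 0" using i CHAR_not_1[where 'a='a] by (metis One_nat_def power_0)
  have "(of_nat (2 ^ i) :: 'a) = 0" using i of_nat_CHAR[where 'a='a] by simp
  hence "(2::'a) ^ i = 0" by simp
  thus ?thesis by simp
qed

lemma frob:
  fixes a b :: "'a::field"
  assumes "(2::'a) = 0"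
  shows "(a + b) ^ (2 ^ k) = a ^ (2 ^ k) + b ^ (2 ^ k)"
proof (induction k)
  case 0 then show ?case by simp
next
  case (Suc k)
  have "(a + b) ^ (2 ^ Suc k) = ((a + b) ^ (2 ^ k))^2" by (simp add: power_mult[symmetric] mult.commute)
  also have "\<dots> = (a ^ (2 ^ k) + b ^ (2 ^ k))^2" using Suc by simp
  also have "\<dots> = (a ^ (2 ^ k))^2 + (b ^ (2 ^ k))^2 + 2 * a ^ (2 ^ k) * b ^ (2 ^ k)"
    by (simp add: power2_eq_square algebra_simps)
  also have "\<dots> = a ^ (2 ^ Suc k) + b ^ (2 ^ Suc k)" using assms
    by (simp add: power_mult[symmetric] mult.commute)
  finally show ?case .
qed

lemma Phi_mult:
  assumes "(a + b) ^ q0 = a ^ q0 + b ^ q0"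
  shows "Phi q0 a c ** Phi q0 b d = Phi q0 (a + b) (c + d + a ^ q0 * b)"
  using assms
  by (simp add: Phi_def matrix_matrix_mult_def vec_eq_iff forall_3 sum_3 algebra_simps)

lemma Phi_inj: "Phi q0 a c = Phi q0 b d \<longleftrightarrow> a = b \<and> c = d"
  by (auto simp: Phi_def vec_eq_iff forall_3)

lemma Phi_one: "q0 > 0 \<Longrightarrow> Phi q0 0 0 = (mat 1 :: 'a::field mat3)"
  by (simp add: Phi_def mat_def vec_eq_iff forall_3)

lemma matrix_inv_eq:
  fixes A B :: "'a::semiring_1^'n^'n"
  assumes "A ** B = mat 1" "B ** A = mat 1"
  shows "matrix_inv A = B"
proof -
  have "\<exists>A'. A ** A' = mat 1 \<and> A' ** A = mat 1" using assms by blast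
  then have h: "A ** matrix_inv A = mat 1 \<and> matrix_inv A ** A = mat 1"
    unfolding matrix_inv_def by (rule someI_ex)
  have "matrix_inv A = matrix_inv A ** (A ** B)" using assms by simp
  also have "\<dots> = (matrix_inv A ** A) ** B" by (simp add: matrix_mul_assoc)
  also have "\<dots> = B" using h by simp
  finally show ?thesis .
qed


lemma fermat:
  fixes a :: "'a::{field,finite}"
  assumes "a \<noteq> 0"
  shows "a ^ (CARD('a) - 1) = 1"
proof -
  define S where "S = (UNIV::'a set) - {0}"
  have fin: "finite S" by simp
  have cS: "card S = CARD('a) - 1" unfolding S_def by (simp add: card_Diff_singleton)
  have inj: "inj_on (\<lambda>x. a * x) S" using assms by (auto simp: inj_on_def)
  have img: "(\<lambda>x. a * x) ` S = S"
  proof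
    show "(\<lambda>x. a * x) ` S \<subseteq> S" using assms by (auto simp: S_def)
    show "S \<subseteq> (\<lambda>x. a * x) ` S"
    proof
      fix y assume "y \<in> S"
      then have "y = a * (y / a)" "y / a \<in> S" using assms by (auto simp: S_def)
      then show "y \<in> (\<lambda>x. a * x) ` S" by blast
    qed
  qed
  have "prod id S = prod id ((\<lambda>x. a * x) ` S)" using img by simp
  also have "\<dots> = prod (\<lambda>x. a * x) S" using prod.reindex[OF inj, of id] by simp
  also have "\<dots> = a ^ card S * prod id S" by (simp add: prod.distrib)
  finally have "a ^ card S * prod id S = 1 * prod id S" by simp
  moreover have "prod id S \<noteq> 0" using fin by (simp add: S_def)
  ultimately have "a ^ card S = 1" by simp
  thus ?thesis using cS by simp
qed

lemma pow_inj:
  fixes a b :: "'a::{field,finite}"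
  assumes "a \<noteq> 0" "b \<noteq> 0" "gcd (n::nat) (CARD('a) - 1) = 1" "n \<noteq> 0"
    and "a ^ n = b ^ n"
  shows "a = b"
proof -
  obtain s t where st: "n * s = (CARD('a) - 1) * t + gcd n (CARD('a) - 1)"
    using bezout_nat[OF assms(4)] by blast
  have e: "x ^ (n * s) = x" if "x \<noteq> 0" for x :: 'a
  proof -
    have "x ^ (n * s) = (x ^ (CARD('a) - 1)) ^ t * x" using st assms(3)
      by (simp add: power_mult[symmetric] power_add)
    also have "\<dots> = x" using fermat[OF that] by simp
    finally show ?thesis .
  qed
  have "a = (a ^ n) ^ s" using e[OF assms(1)] by (simp add: power_mult)
  also have "\<dots> = (b ^ n) ^ s" using assms(5) by simp
  also have "\<dots> = b" using e[OF assms(2)] by (simp add: power_mult)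
  finally show ?thesis .
qed


lemma two_add_self: "(2::'a::field) = 0 \<Longrightarrow> x + x = (0::'a)"
  by (metis mult_2 mult_zero_left)

lemma two_neg: "(2::'a::field) = 0 \<Longrightarrow> - x = (x::'a)"
  by (metis add_eq_0_iff two_add_self)

lemma inv_Phi:
  fixes a c :: "'a::field"
  assumes two: "(2::'a) = 0" and FR: "\<And>a b::'a. (a+b)^q0 = a^q0+b^q0" and q: "q0 > 0"
  shows "matrix_inv (Phi q0 a c) = Phi q0 a (c + a ^ (q0 + 1))"
proof (rule matrix_inv_eq)
  have z: "x + x = 0" for x :: 'a using two_add_self[OF two] .
  have e1: "c + (c + a ^ (q0 + 1)) + a ^ q0 * a = 2 * c + 2 * (a ^ q0 * a)"
    "c + a ^ (q0 + 1) + c + a ^ q0 * a = 2 * c + 2 * (a ^ q0 * a)"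
    by (simp_all add: algebra_simps)
  have e: "c + (c + a ^ (q0 + 1)) + a ^ q0 * a = 0" "c + a ^ (q0 + 1) + c + a ^ q0 * a = 0"
    using e1 two by simp_all
  have "Phi q0 a c ** Phi q0 a (c + a ^ (q0 + 1)) = Phi q0 (a + a) (c + (c + a ^ (q0 + 1)) + a ^ q0 * a)"
    by (rule Phi_mult[OF FR])
  also have "\<dots> = Phi q0 0 0" using e two by simp
  finally show "Phi q0 a c ** Phi q0 a (c + a ^ (q0 + 1)) = mat 1" using Phi_one[OF q] by simp
  have "Phi q0 a (c + a ^ (q0 + 1)) ** Phi q0 a c = Phi q0 (a + a) (c + a ^ (q0 + 1) + c + a ^ q0 * a)"
    by (rule Phi_mult[OF FR])
  also have "\<dots> = Phi q0 0 0" using e two by simp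
  finally show "Phi q0 a (c + a ^ (q0 + 1)) ** Phi q0 a c = mat 1" using Phi_one[OF q] by simp
qed

lemma KK_iff: "x \<in> KK q0 \<longleftrightarrow> (\<exists>a c. x = Phi q0 a c)"
  by (auto simp: KK_def)

lemma adj_Kp:
  fixes a c e u :: "'a::field"
  assumes two: "(2::'a) = 0" and FR: "\<And>a b::'a. (a+b)^q0 = a^q0+b^q0" and q: "q0 > 0"
  shows "adj q0 u (Phi q0 a c) (Phi q0 0 e) \<longleftrightarrow>
     a \<noteq> 0 \<and> (c + e = u * a ^ (q0 + 1) \<or> c + e = (u + 1) * a ^ (q0 + 1))"
proof -
  have "matrix_inv (Phi q0 0 e) = Phi q0 0 e" using inv_Phi[OF two FR q, of 0 e] by simp
  moreover have "Phi q0 a c ** Phi q0 0 e = Phi q0 a (c + e)" using FR q by (simp add: Phi_mult)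
  ultimately show ?thesis
    unfolding adj_def Omega_def by (auto simp: KK_iff Phi_inj)
qed


lemma Kp_fix:
  assumes "\<sigma> \<in> stabE q0 u"
  shows "\<sigma> (Phi q0 0 e) = Phi q0 0 e"
  using assms unfolding stabE_def Kprime_def Omega_inf_def by (cases "e = 0") auto

lemma key:
  fixes u :: "'a::{field,finite}"
  assumes two: "(2::'a) = 0" and FR: "\<And>a b::'a. (a+b)^q0 = a^q0+b^q0" and q: "q0 > 0"
    and g: "gcd (q0 + 1) (CARD('a) - 1) = 1"
    and sig: "\<sigma> \<in> stabE q0 u" and x: "x \<in> KK q0"
  shows "\<sigma> x = x \<or> \<sigma> x = matrix_inv x"
proof -
  obtain a c where xd: "x = Phi q0 a c" using x by (auto simp: KK_iff)
  show ?thesis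
  proof (cases "a = 0")
    case True then show ?thesis using Kp_fix[OF sig] xd by simp
  next
    case False
    have ga: "\<sigma> \<in> graph_aut q0 u" using sig by (simp add: stabE_def)
    then have bij: "bij_betw \<sigma> (KK q0) (KK q0)" and
      pres: "\<And>x y. x \<in> KK q0 \<Longrightarrow> y \<in> KK q0 \<Longrightarrow> adj q0 u (\<sigma> x) (\<sigma> y) \<longleftrightarrow> adj q0 u x y"
      by (auto simp: graph_aut_def)
    have "\<sigma> x \<in> KK q0" using bij x bij_betwE by blast
    then obtain a' c' where sx: "\<sigma> x = Phi q0 a' c'" by (auto simp: KK_iff)
    define A where "A = a ^ (q0 + 1)"
    define A' where "A' = a' ^ (q0 + 1)"
    have Kp0: "Phi q0 0 e \<in> KK q0" for e by (auto simp: KK_iff)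
    have tr: "adj q0 u (Phi q0 a' c') (Phi q0 0 e) \<longleftrightarrow> adj q0 u (Phi q0 a c) (Phi q0 0 e)" for e
      using pres[OF x Kp0[of e]] sx xd Kp_fix[OF sig, of e] by simp
    have Anz: "A \<noteq> 0" using False by (simp add: A_def)
    have m: "- y = y" for y :: 'a using two_neg[OF two] .
    have cc: "c + (c + y) = y" for y
      using two_add_self[OF two, of c] by (metis add.assoc add_0)
    have adjK: "adj q0 u (Phi q0 a'' c'') (Phi q0 0 e) \<longleftrightarrow>
     a'' \<noteq> 0 \<and> (c'' + e = u * a'' ^ (q0 + 1) \<or> c'' + e = (u + 1) * a'' ^ (q0 + 1))" for a'' c'' e
      by (rule adj_Kp[OF two FR q])
    have "adj q0 u (Phi q0 a c) (Phi q0 0 (c + u * A))"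
      unfolding adjK A_def[symmetric] using False cc by simp
    then have h1: "a' \<noteq> 0 \<and> (c' + (c + u * A) = u * A' \<or> c' + (c + u * A) = (u + 1) * A')"
      using tr[of "c + u * A"] unfolding adjK A'_def[symmetric] A_def[symmetric] by blast
    have "adj q0 u (Phi q0 a c) (Phi q0 0 (c + (u + 1) * A))"
      unfolding adjK A_def[symmetric] using False cc by simp
    then have h2: "c' + (c + (u + 1) * A) = u * A' \<or> c' + (c + (u + 1) * A) = (u + 1) * A'"
      using tr[of "c + (u + 1) * A"] unfolding adjK A'_def[symmetric] A_def[symmetric] by blast
    have dif: "A = (c' + (c + (u + 1) * A)) - (c' + (c + u * A))" by (simp add: algebra_simps)
    have AA: "A = A' \<and> (c' = c \<or> c' = c + A)"
    proof -
      { assume e1: "c' + (c + u * A) = u * A'" and e2: "c' + (c + (u + 1) * A) = u * A'"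
        have False using dif e1 e2 Anz by simp }
      moreover
      { assume e1: "c' + (c + u * A) = (u + 1) * A'" and e2: "c' + (c + (u + 1) * A) = (u + 1) * A'"
        have False using dif e1 e2 Anz by simp }
      moreover
      { assume e1: "c' + (c + u * A) = u * A'" and e2: "c' + (c + (u + 1) * A) = (u + 1) * A'"
        have AA': "A = A'" using dif e1 e2 by (simp add: algebra_simps)
        have "c' = c' + (c + u * A) - u * A - c" by simp
        also have "\<dots> = - c" using e1 AA' by simp
        finally have "c' = c" using m by simp
        with AA' have ?thesis by simp }
      moreover
      { assume e1: "c' + (c + u * A) = (u + 1) * A'" and e2: "c' + (c + (u + 1) * A) = u * A'"
        have "A' + A = 0" using dif e1 e2 by (simp add: algebra_simps)
        then have "A = - A'" by (metis add.commute add_eq_0_iff)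
        then have AA': "A = A'" using m by simp
        have "c' = c' + (c + u * A) - u * A - c" by simp
        also have "\<dots> = A - c" using e1 AA' by (simp add: algebra_simps)
        finally have "c' = A - c" .
        then have "c' = c + A" by (metis m diff_conv_add_uminus add.commute)
        with AA' have ?thesis by simp }
      ultimately show ?thesis using h1 h2 by blast
    qed
    have "a = a'" using pow_inj[OF False _ g] h1 AA by (simp add: A_def A'_def)
    then show ?thesis using AA sx xd inv_Phi[OF two FR q] by (auto simp: A_def)
  qed
qed


lemma inv_KK:
  fixes x :: "'a::field mat3"
  assumes two: "(2::'a) = 0" and FR: "\<And>a b::'a. (a+b)^q0 = a^q0+b^q0" and q: "q0 > 0"
    and x: "x \<in> KK q0"
  shows "matrix_inv x \<in> KK q0" "matrix_inv (matrix_inv x) = x"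
proof -
  obtain a c where xd: "x = Phi q0 a c" using x by (auto simp: KK_iff)
  show "matrix_inv x \<in> KK q0" using xd inv_Phi[OF two FR q] by (auto simp: KK_iff)
  have E1: "c + a ^ (q0 + 1) + a ^ (q0 + 1) = c" using two_add_self[OF two] by (metis add.assoc add_0_right)
  have E2: "matrix_inv (matrix_inv x) = Phi q0 a (c + a ^ (q0 + 1) + a ^ (q0 + 1))"
    by (simp only: xd inv_Phi[OF two FR q])
  show "matrix_inv (matrix_inv x) = x" using E1 E2 xd by metis
qed

theorem lemma8p1:
  fixes u :: "'a::{field,finite}" and f q0 :: nat
  assumes "CARD('a) = 2 ^ f" and "f \<ge> 4"
    and "\<exists>k. q0 = 2 ^ k" and "q0 < CARD('a)"
    and "gcd (CARD('a) - 1) (q0\<^sup>2 - 1) = 1"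
    and "u \<in> U_set q0"
  shows "stabE q0 u = {id} \<or>
    ((\<forall>\<sigma>\<in>stabE q0 u. \<sigma> \<circ> \<sigma> = id) \<and>
     (\<forall>\<sigma>\<in>stabE q0 u. \<forall>\<tau>\<in>stabE q0 u. \<sigma> \<circ> \<tau> = \<tau> \<circ> \<sigma>) \<and>
     (\<forall>\<sigma>\<in>stabE q0 u. \<forall>a c. \<sigma> ` {Phi q0 a c, matrix_inv (Phi q0 a c)} =
                                 {Phi q0 a c, matrix_inv (Phi q0 a c)}))"
proof -
  have two: "(2::'a) = 0" using char2[OF assms(1)] .
  obtain k where k: "q0 = 2 ^ k" using assms(3) by blast
  have FR: "\<And>a b::'a. (a+b)^q0 = a^q0+b^q0" using frob[OF two] k by simp
  have q: "q0 > 0" using k by simp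
  have dv: "(q0 + 1) dvd q0\<^sup>2 - 1"
  proof -
    have "q0\<^sup>2 - 1 = (q0 + 1) * (q0 - 1)" using q
      by (simp add: power2_eq_square algebra_simps diff_mult_distrib2)
    then show ?thesis by (metis dvd_triv_left)
  qed
  have "gcd (q0 + 1) (CARD('a) - 1) dvd gcd (CARD('a) - 1) (q0\<^sup>2 - 1)"
    by (meson dv dvd_trans gcd_dvd1 gcd_dvd2 gcd_greatest)
  then have "gcd (q0 + 1) (CARD('a) - 1) dvd 1" using assms(5) by metis
  then have g: "gcd (q0 + 1) (CARD('a) - 1) = 1" by simp
  let ?K = "KK q0 :: 'a mat3 set"
  let ?i = "matrix_inv :: 'a mat3 \<Rightarrow> 'a mat3"
  have out: "\<sigma> x = x" if "\<sigma> \<in> stabE q0 u" "x \<notin> ?K" for \<sigma> x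
    using that by (auto simp: stabE_def graph_aut_def)
  have inj: "inj_on \<sigma> ?K" if "\<sigma> \<in> stabE q0 u" for \<sigma>
    using that by (auto simp: stabE_def graph_aut_def bij_betw_def)
  have K: "\<sigma> x = x \<or> \<sigma> x = ?i x" if "\<sigma> \<in> stabE q0 u" "x \<in> ?K" for \<sigma> x
    using key[OF two FR q g that] .
  have loc: "(\<sigma> x = x \<and> \<sigma> (?i x) = ?i x) \<or> (\<sigma> x = ?i x \<and> \<sigma> (?i x) = x)"
    if s: "\<sigma> \<in> stabE q0 u" and x: "x \<in> ?K" for \<sigma> x
  proof -
    have ix: "?i x \<in> ?K" "?i (?i x) = x" using inv_KK[OF two FR q x] by auto
    have a: "\<sigma> x = x \<or> \<sigma> x = ?i x" using K[OF s x] .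
    have b: "\<sigma> (?i x) = ?i x \<or> \<sigma> (?i x) = x" using K[OF s ix(1)] ix(2) by simp
    show ?thesis using a b inj_onD[OF inj[OF s] _ x ix(1)] by metis
  qed
  have C1: "\<forall>\<sigma>\<in>stabE q0 u. \<sigma> \<circ> \<sigma> = id"
  proof (intro ballI ext)
    fix \<sigma> x assume s: "\<sigma> \<in> stabE q0 u"
    show "(\<sigma> \<circ> \<sigma>) x = id x"
    proof (cases "x \<in> ?K")
      case True then show ?thesis using loc[OF s True] by auto
    next
      case False then show ?thesis using out[OF s False] by simp
    qed
  qed
  have C2: "\<forall>\<sigma>\<in>stabE q0 u. \<forall>\<tau>\<in>stabE q0 u. \<sigma> \<circ> \<tau> = \<tau> \<circ> \<sigma>"
  proof (intro ballI ext)
    fix \<sigma> \<tau> x assume s: "\<sigma> \<in> stabE q0 u" and t: "\<tau> \<in> stabE q0 u"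
    show "(\<sigma> \<circ> \<tau>) x = (\<tau> \<circ> \<sigma>) x"
    proof (cases "x \<in> ?K")
      case True then show ?thesis using loc[OF s True] loc[OF t True] by auto
    next
      case False then show ?thesis using out[OF s False] out[OF t False] by simp
    qed
  qed
  have C3: "\<forall>\<sigma>\<in>stabE q0 u. \<forall>a c. \<sigma> ` {Phi q0 a c, matrix_inv (Phi q0 a c)} =
                                 {Phi q0 a c, matrix_inv (Phi q0 a c)}"
  proof (intro ballI allI)
    fix \<sigma> and a c :: 'a assume s: "\<sigma> \<in> stabE q0 u"
    have "Phi q0 a c \<in> ?K" by (auto simp: KK_iff)
    from loc[OF s this] show "\<sigma> ` {Phi q0 a c, matrix_inv (Phi q0 a c)} =
                                 {Phi q0 a c, matrix_inv (Phi q0 a c)}" by auto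
  qed
  show ?thesis using C1 C2 C3 by blast
qed

end
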